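(* For every base $b\ge 2$ there exist infinitely many (distinct) arithmetic progressions of length $b$ all of whose terms are $b$-wARH numbers.
   Context: Fix a base $b\ge 2$. $s_b(N)$ is the sum of the base-$b$ digits of $N$. For a positive integer $X$, its reversal $X^R$ is the integer whose base-$b$ representation is that of $X$ written in reverse order (leading zeros of the result are dropped). A positive integer $N$ is a $b$-wARH number if there exists an integer $A\ge 0$ such that $N=(A+s_b(N))+(A+s_b(N))^R$. *)

theory Defs
  imports Main
begin

text \<open>Base-b digits, least significant first (no leading zeros; empty list for 0).\<close>
fun digits :: "nat \<Rightarrow> nat \<Rightarrow> nat list" where
  "digits b n = (if b < 2 \<or> n = 0 then [] else n mod b # digits b (n div b))"

declare digits.simps [simp del]

fun from_digits :: "nat \<Rightarrow> nat list \<Rightarrow> nat" where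
  "from_digits b [] = 0"
| "from_digits b (d # ds) = d + b * from_digits b ds"

definition digit_sum :: "nat \<Rightarrow> nat \<Rightarrow> nat" where
  "digit_sum b n = sum_list (digits b n)"

text \<open>Reversal of the base-b representation; leading zeros of the result vanish automatically.\<close>
definition reversal :: "nat \<Rightarrow> nat \<Rightarrow> nat" where
  "reversal b n = from_digits b (rev (digits b n))"

definition wARH :: "nat \<Rightarrow> nat \<Rightarrow> bool" where
  "wARH b N \<longleftrightarrow> N > 0 \<and>
     (\<exists>A::nat. N = (A + digit_sum b N) + reversal b (A + digit_sum b N))"

end

theory Submission
  imports Defs
begin

lemma digits_step:
  assumes "b \<ge> 2" "d < b" "n > 0"
  shows "digits b (d + b*n) = d # digits b n"
proof -
  have "d + b*n \<noteq> 0" using assms by auto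
  moreover have "(d + b*n) mod b = d" using assms by simp
  moreover have "(d + b*n) div b = n" using assms by simp
  ultimately show ?thesis using assms(1) by (subst digits.simps) auto
qed

lemma digits_single:
  assumes "b \<ge> 2" "0 < x" "x < b"
  shows "digits b x = [x]"
proof -
  have "digits b (x + b*0) = [x]" using assms
    by (subst digits.simps) (simp add: digits.simps)
  thus ?thesis by simp
qed

lemma digits_pow:
  assumes "b \<ge> 2" "0 < x" "x < b"
  shows "digits b (x * b^j) = replicate j 0 @ [x]"
proof (induction j)
  case 0 thus ?case using digits_single[OF assms] by simp
next
  case (Suc j)
  have "x * b^Suc j = 0 + b * (x * b^j)" by simp
  also have "digits b \<dots> = 0 # digits b (x*b^j)"
    using assms by (intro digits_step) auto
  finally show ?case using Suc by simp
qed

lemma from_digits_app: "from_digits b (replicate j 0 @ ys) = b^j * from_digits b ys"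
  by (induction j) auto

lemma digit_sum_step:
  assumes "b \<ge> 2" "d < b"
  shows "digit_sum b (d + b*n) = d + digit_sum b n"
proof (cases "n = 0")
  case True
  then show ?thesis
  proof (cases "d = 0")
    case True with \<open>n=0\<close> show ?thesis by (simp add: digit_sum_def digits.simps)
  next
    case False
    with \<open>n=0\<close> assms show ?thesis
      by (simp add: digit_sum_def digits_single digits.simps[of b 0])
  qed
next
  case False
  then show ?thesis using digits_step[OF assms] by (simp add: digit_sum_def)
qed

lemma digit_sum_le: "digit_sum b n \<le> n"
proof (induction n rule: less_induct)
  case (less n)
  show ?case
  proof (cases "b < 2 \<or> n = 0")
    case True thus ?thesis by (simp add: digit_sum_def digits.simps)
  next
    case False
    hence "n div b < n" by auto
    with less have "digit_sum b (n div b) \<le> n div b" by blast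
    moreover have "digit_sum b n = n mod b + digit_sum b (n div b)"
      using False by (simp add: digit_sum_def digits.simps[of b n])
    moreover have "n mod b + n div b \<le> n"
    proof -
      have "n div b \<le> b * (n div b)" using False by simp
      moreover have "n mod b + b*(n div b) = n" by simp
      ultimately show ?thesis by linarith
    qed
    ultimately show ?thesis by linarith
  qed
qed

lemma digit_sum_times: assumes "b \<ge> 2" shows "digit_sum b (b*n) = digit_sum b n"
  using digit_sum_step[OF assms, of 0 n] assms by simp

lemma digit_sum_pow: assumes "b \<ge> 2" shows "digit_sum b (s * b^j) = digit_sum b s"
  by (induction j) (simp_all add: digit_sum_times[OF assms] mult.left_commute)

lemma key:
  assumes b: "b \<ge> 2" and j: "j \<ge> 1" and s: "1 \<le> s" "s \<le> b"
  shows "wARH b (s * (b^(j+1) + 1))"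
proof -
  define y where "y = (if s = b then 1 else 0::nat)"
  define x where "x = s - y"
  have y: "y < b" and x: "0 < x" "x < b" and sxy: "s = x + y"
    using b s by (auto simp: y_def x_def)
  define X where "X = y + b * (x * b^j)"
  have dX: "digits b X = y # replicate j 0 @ [x]"
    unfolding X_def using b x y by (subst digits_step) (auto simp: digits_pow)
  have rX: "reversal b X = x + b * (b^j * y)"
  proof -
    have "reversal b X = from_digits b (x # (replicate j 0 @ [y]))"
      unfolding reversal_def dX by simp
    also have "\<dots> = x + b * (b^j * from_digits b [y])"
      by (simp only: from_digits.simps from_digits_app)
    also have "from_digits b [y] = y" by simp
    finally show ?thesis .
  qed
  have N: "X + reversal b X = s * (b^(j+1) + 1)"
    unfolding rX unfolding X_def sxy by (simp add: algebra_simps)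
  let ?N = "s * (b^(j+1) + 1)"
  have "?N = s + b * (s * b^j)" by (simp add: algebra_simps)
  have dsN: "digit_sum b ?N \<le> 2 * b"
  proof (cases "s = b")
    case True
    have "?N = 0 + b * (1 + b * (b^j))" using True by (simp add: algebra_simps)
    hence "digit_sum b ?N = digit_sum b (b*(1 + b*(b^j)))" by simp
    also have "\<dots> = digit_sum b (1 + b*(b^j))" by (rule digit_sum_times[OF b])
    also have "\<dots> = 1 + digit_sum b (b^j)" using digit_sum_step[OF b, of 1] b by simp
    also have "digit_sum b (b^j) = digit_sum b 1" using digit_sum_pow[OF b, of 1 j] by simp
    also have "digit_sum b 1 \<le> 1" using digit_sum_le by simp
    finally show ?thesis using b by simp
  next
    case False
    hence "s < b" using s by simp
    have eqN: "?N = s + b * (s * b^j)" by (simp add: algebra_simps)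
    have "digit_sum b ?N = s + digit_sum b (s*b^j)"
      unfolding eqN by (rule digit_sum_step[OF b \<open>s<b\<close>])
    also have "\<dots> = s + digit_sum b s" using digit_sum_pow[OF b] by simp
    also have "\<dots> \<le> 2*b" using digit_sum_le[of b s] s by simp
    finally show ?thesis .
  qed
  have "b^j \<ge> b^1" using j b by (intro power_increasing) auto
  moreover have "1 * b^j \<le> x * b^j" using x by (intro mult_le_mono1) simp
  ultimately have "b \<le> x * b^j" using order_trans by (metis power_one_right mult_1)
  hence "b * b \<le> b * (x * b^j)" by (rule mult_le_mono2)
  moreover have "2*b \<le> b*b" using b by simp
  ultimately have le: "digit_sum b ?N \<le> X" using dsN unfolding X_def by linarith
  show ?thesis unfolding wARH_def
  proof
    show "?N > 0" using s b by simp
    show "\<exists>A. ?N = A + digit_sum b ?N + reversal b (A + digit_sum b ?N)"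
      by (rule exI[of _ "X - digit_sum b ?N"]) (use le N in simp)
  qed
qed

theorem corollary7:
  fixes b :: nat
  assumes "b \<ge> 2"
  shows "infinite {(a::nat, d::nat). d > 0 \<and> (\<forall>i<b. wARH b (a + i * d))}"
proof -
  define f where "f j = (b^(j+1) + 1, b^(j+1) + 1)" for j :: nat
  have sub: "f ` {1..} \<subseteq> {(a::nat, d::nat). d > 0 \<and> (\<forall>i<b. wARH b (a + i * d))}"
  proof
    fix p assume "p \<in> f ` {1..}"
    then obtain j where j: "j \<ge> 1" and p: "p = f j" by auto
    have "\<forall>i<b. wARH b ((b^(j+1) + 1) + i * (b^(j+1) + 1))"
    proof (intro allI impI)
      fix i assume "i < b"
      then have wa: "wARH b ((i+1) * (b^(j+1) + 1))" using key[OF assms j, of "i+1"] by simp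
      have eq: "(i+1) * (b^(j+1) + 1) = (b^(j+1) + 1) + i * (b^(j+1) + 1)" by simp
      show "wARH b ((b^(j+1) + 1) + i * (b^(j+1) + 1))" using wa unfolding eq .
    qed
    then show "p \<in> {(a::nat, d::nat). d > 0 \<and> (\<forall>i<b. wARH b (a + i * d))}"
      unfolding p f_def by simp
  qed
  have "strict_mono (\<lambda>j::nat. b^(j+1))" using assms
    by (intro strict_monoI) (simp add: power_strict_increasing)
  hence "inj f" unfolding f_def inj_def using strict_mono_eq by fastforce
  hence inj1: "inj_on f {1..}" by (rule inj_on_subset) simp
  have "infinite {1::nat..}" by (rule infinite_Ici)
  hence "infinite (f ` {1..})" using finite_imageD inj1 by blast
  thus ?thesis using sub infinite_super by blast
qed

end
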